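(* There is no quadratical quasigroup $(Q,\cdot)$ containing two distinct elements $a,b$ such that $Q=\{aba\}\cup H1\cup H2\cup H3\cup H4\cup H5\cup H6$ with the six sets $H1,\dots,H6$ pairwise disjoint (equivalently, with $|Q|=25$).
   Context: A quadratical quasigroup is a quasigroup $(Q,\cdot)$ satisfying $xy\cdot x=zx\cdot yz$ for all $x,y,z\in Q$; equivalently, a groupoid satisfying $x\cdot x=x$, $yx\cdot xy=x$ and $xy\cdot zw=xz\cdot yw$ for all $x,y,z,w$. For distinct $a,b\in Q$ write $aba=ab\cdot a$ and define elements $[t,k]$ (written $tk$), $t\geq 1$, $k\in\{1,2,3,4\}$, by $11=a$, $12=ab$, $13=ba$, $14=b$, and for $n\geq 2$: $n1=(n-1)1\cdot(n-1)2$, $n2=(n-1)2\cdot(n-1)4$, $n3=(n-1)3\cdot(n-1)1$, $n4=(n-1)4\cdot(n-1)3$. Put $Ht=\{t1,t2,t3,t4\}$. *)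

theory Defs
  imports Main
begin

definition quasigroup :: "'a set \<Rightarrow> ('a \<Rightarrow> 'a \<Rightarrow> 'a) \<Rightarrow> bool" where
  "quasigroup Q m \<longleftrightarrow>
     (\<forall>x\<in>Q. \<forall>y\<in>Q. m x y \<in> Q) \<and>
     (\<forall>a\<in>Q. \<forall>b\<in>Q. (\<exists>!x. x \<in> Q \<and> m a x = b) \<and> (\<exists>!y. y \<in> Q \<and> m y a = b))"

definition quadratical_quasigroup :: "'a set \<Rightarrow> ('a \<Rightarrow> 'a \<Rightarrow> 'a) \<Rightarrow> bool" where
  "quadratical_quasigroup Q m \<longleftrightarrow> quasigroup Q m \<and>
     (\<forall>x\<in>Q. \<forall>y\<in>Q. \<forall>z\<in>Q. m (m x y) x = m (m z x) (m y z))"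

text \<open>hquad m a b n = ([n+1]1, [n+1]2, [n+1]3, [n+1]4).\<close>
fun hquad :: "('a \<Rightarrow> 'a \<Rightarrow> 'a) \<Rightarrow> 'a \<Rightarrow> 'a \<Rightarrow> nat \<Rightarrow> 'a \<times> 'a \<times> 'a \<times> 'a" where
  "hquad m a b 0 = (a, m a b, m b a, b)"
| "hquad m a b (Suc n) =
     (case hquad m a b n of (x1, x2, x3, x4) \<Rightarrow> (m x1 x2, m x2 x4, m x3 x1, m x4 x3))"

definition Hset :: "('a \<Rightarrow> 'a \<Rightarrow> 'a) \<Rightarrow> 'a \<Rightarrow> 'a \<Rightarrow> nat \<Rightarrow> 'a set" where
  "Hset m a b t = (case hquad m a b (t - 1) of (x1, x2, x3, x4) \<Rightarrow> {x1, x2, x3, x4})"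

end

theory Submission imports Defs "HOL-Algebra.FiniteProduct" begin

locale qq =
  fixes Q :: "'a set" and m :: "'a \<Rightarrow> 'a \<Rightarrow> 'a"
  assumes qq: "quadratical_quasigroup Q m"
begin

lemma clo[simp,intro]: "x \<in> Q \<Longrightarrow> y \<in> Q \<Longrightarrow> m x y \<in> Q"
  using qq unfolding quadratical_quasigroup_def quasigroup_def by blast

lemma qg: "(\<forall>x\<in>Q. \<forall>y\<in>Q. m x y \<in> Q) \<and>
     (\<forall>a\<in>Q. \<forall>b\<in>Q. (\<exists>!x. x \<in> Q \<and> m a x = b) \<and> (\<exists>!y. y \<in> Q \<and> m y a = b))"
  using qq unfolding quadratical_quasigroup_def quasigroup_def by simp

lemma ex1l: "a \<in> Q \<Longrightarrow> b \<in> Q \<Longrightarrow> \<exists>!x. x \<in> Q \<and> m a x = b"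
  using qg by simp
lemma ex1r: "a \<in> Q \<Longrightarrow> b \<in> Q \<Longrightarrow> \<exists>!x. x \<in> Q \<and> m x a = b"
  using qg by simp

lemma lcan: "z \<in> Q \<Longrightarrow> x \<in> Q \<Longrightarrow> y \<in> Q \<Longrightarrow> m z x = m z y \<Longrightarrow> x = y"
  using ex1l[of z "m z x"] by (metis clo)

lemma rcan: "z \<in> Q \<Longrightarrow> x \<in> Q \<Longrightarrow> y \<in> Q \<Longrightarrow> m x z = m y z \<Longrightarrow> x = y"
  using ex1r[of z "m x z"] by (metis clo)

lemma lsol: "z \<in> Q \<Longrightarrow> w \<in> Q \<Longrightarrow> \<exists>u\<in>Q. m z u = w"
  using ex1l by blast

lemma rsol: "z \<in> Q \<Longrightarrow> w \<in> Q \<Longrightarrow> \<exists>u\<in>Q. m u z = w"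
  using ex1r by blast

lemma A: "x \<in> Q \<Longrightarrow> y \<in> Q \<Longrightarrow> z \<in> Q \<Longrightarrow> m (m x y) x = m (m z x) (m y z)"
  using qq unfolding quadratical_quasigroup_def by blast

lemma idem[simp]: "x \<in> Q \<Longrightarrow> m x x = x"
proof -
  assume x: "x \<in> Q"
  have "m (m x x) x = m (m x x) (m x x)" using A[OF x x x] .
  then show ?thesis using lcan[of "m x x" x "m x x"] x by auto
qed

lemma B: "x \<in> Q \<Longrightarrow> z \<in> Q \<Longrightarrow> m (m z x) (m x z) = x"
  using A[of x x z] by simp

lemma medial: "x\<in>Q \<Longrightarrow> y\<in>Q \<Longrightarrow> z\<in>Q \<Longrightarrow> w\<in>Q \<Longrightarrow> m (m x y) (m z w) = m (m x z) (m y w)"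
  by (smt (verit, ccfv_SIG) A idem clo)

end

locale qqc = qq +
  fixes c assumes cQ[simp]: "c \<in> Q"
begin

definition R where "R x = m x c"
definition L where "L x = m c x"
definition Ri where "Ri x = (THE y. y \<in> Q \<and> m y c = x)"
definition Li where "Li x = (THE y. y \<in> Q \<and> m c y = x)"

lemma R_Q[simp]: "x \<in> Q \<Longrightarrow> R x \<in> Q" by (simp add: R_def)
lemma L_Q[simp]: "x \<in> Q \<Longrightarrow> L x \<in> Q" by (simp add: L_def)

lemma Ri: "x \<in> Q \<Longrightarrow> Ri x \<in> Q \<and> m (Ri x) c = x"
proof -
  assume x: "x \<in> Q"
  obtain u where u: "u \<in> Q" "m u c = x" using rsol[OF cQ x] by blast
  have "\<exists>!y. y \<in> Q \<and> m y c = x" using ex1r[OF cQ x] .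
  then show ?thesis unfolding Ri_def by (rule theI')
qed

lemma Li: "x \<in> Q \<Longrightarrow> Li x \<in> Q \<and> m c (Li x) = x"
proof -
  assume x: "x \<in> Q"
  obtain u where u: "u \<in> Q" "m c u = x" using lsol[OF cQ x] by blast
  have "\<exists>!y. y \<in> Q \<and> m c y = x" using ex1l[OF cQ x] .
  then show ?thesis unfolding Li_def by (rule theI')
qed

lemma Ri_Q[simp]: "x \<in> Q \<Longrightarrow> Ri x \<in> Q" using Ri by blast
lemma Li_Q[simp]: "x \<in> Q \<Longrightarrow> Li x \<in> Q" using Li by blast
lemma R_Ri[simp]: "x \<in> Q \<Longrightarrow> R (Ri x) = x" using Ri by (simp add: R_def)
lemma L_Li[simp]: "x \<in> Q \<Longrightarrow> L (Li x) = x" using Li by (simp add: L_def)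
lemma R_inj: "x \<in> Q \<Longrightarrow> y \<in> Q \<Longrightarrow> R x = R y \<Longrightarrow> x = y"
  unfolding R_def using rcan[of c] by simp
lemma L_inj: "x \<in> Q \<Longrightarrow> y \<in> Q \<Longrightarrow> L x = L y \<Longrightarrow> x = y"
  unfolding L_def using lcan[of c] by simp
lemma Ri_R[simp]: "x \<in> Q \<Longrightarrow> Ri (R x) = x" using R_inj by simp
lemma Li_L[simp]: "x \<in> Q \<Longrightarrow> Li (L x) = x" using L_inj by simp
lemma R_c[simp]: "R c = c" by (simp add: R_def)
lemma L_c[simp]: "L c = c" by (simp add: L_def)
lemma Ri_c[simp]: "Ri c = c" by (metis R_c Ri_R cQ)
lemma Li_c[simp]: "Li c = c" by (metis L_c Li_L cQ)

lemma R_hom: "x \<in> Q \<Longrightarrow> y \<in> Q \<Longrightarrow> R (m x y) = m (R x) (R y)"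
  unfolding R_def using medial[of x y c c] by simp
lemma L_hom: "x \<in> Q \<Longrightarrow> y \<in> Q \<Longrightarrow> L (m x y) = m (L x) (L y)"
  unfolding L_def using medial[of c c x y] by simp
lemma RL: "x \<in> Q \<Longrightarrow> R (L x) = L (R x)"
  unfolding R_def L_def using medial[of c x c c] by simp
lemma RLi: "x \<in> Q \<Longrightarrow> R (Li x) = Li (R x)"
  by (metis L_Li Li_L Li_Q RL R_Q)
lemma LRi: "x \<in> Q \<Longrightarrow> L (Ri x) = Ri (L x)"
  by (metis R_Ri Ri_R Ri_Q RL L_Q)
lemma RiLi: "x \<in> Q \<Longrightarrow> Ri (Li x) = Li (Ri x)"
  by (metis Li_Q R_Ri RLi Ri_Q Ri_R)

definition add where "add x y = m (Ri x) (Li y)"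

lemma add_Q[simp]: "x \<in> Q \<Longrightarrow> y \<in> Q \<Longrightarrow> add x y \<in> Q" by (simp add: add_def)
lemma add_c[simp]: "y \<in> Q \<Longrightarrow> add c y = y" by (simp add: add_def L_def[symmetric])
lemma add_c2[simp]: "y \<in> Q \<Longrightarrow> add y c = y" by (simp add: add_def R_def[symmetric])

lemma RL_inj: "x \<in> Q \<Longrightarrow> y \<in> Q \<Longrightarrow> R (L x) = R (L y) \<Longrightarrow> x = y"
  by (metis R_inj L_inj L_Q)

lemma RL_add: "x \<in> Q \<Longrightarrow> y \<in> Q \<Longrightarrow> R (L (add x y)) = m (L x) (R y)"
proof -
  assume x: "x \<in> Q" and y: "y \<in> Q"
  have "L (add x y) = m (L (Ri x)) y" unfolding add_def using x y by (simp add: L_hom)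
  moreover have "R (L (Ri x)) = L x" using x by (simp add: RL)
  ultimately show ?thesis using x y by (simp add: R_hom)
qed

lemma add_comm: "x \<in> Q \<Longrightarrow> y \<in> Q \<Longrightarrow> add x y = add y x"
proof -
  assume x: "x \<in> Q" and y: "y \<in> Q"
  have "m (L x) (R y) = m (L y) (R x)"
    using x y medial[of c x y c] by (simp add: R_def L_def)
  then have "R (L (add x y)) = R (L (add y x))"
    using x y by (simp add: RL_add)
  then show ?thesis using x y RL_inj by (metis add_Q)
qed


lemma add_assoc: "x \<in> Q \<Longrightarrow> y \<in> Q \<Longrightarrow> z \<in> Q \<Longrightarrow> add (add x y) z = add x (add y z)"
proof -
  assume x: "x \<in> Q" and y: "y \<in> Q" and z: "z \<in> Q"
  have l1: "L (add x y) = m (L (Ri x)) y" unfolding add_def using x y by (simp add: L_hom)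
  have r1: "R (add y z) = m y (R (Li z))" unfolding add_def using y z by (simp add: R_hom)
  have h1: "m c x = m (L (Ri x)) c"
  proof -
    have "m c x = m (m c c) (m (Ri x) c)" using x Ri by simp
    also have "\<dots> = m (m c (Ri x)) (m c c)" using x medial[of c c "Ri x" c] by simp
    finally show ?thesis using x by (simp add: L_def)
  qed
  have h2: "m c (R (Li z)) = m z c"
    using z by (simp add: L_def[symmetric] R_def[symmetric] RL[symmetric])
  have "R (L (add (add x y) z)) = m (m (L (Ri x)) y) (m z c)"
    using x y z by (simp add: RL_add l1 R_def[of z])
  also have "\<dots> = m (m (L (Ri x)) c) (m y (R (Li z)))"
    using x y z medial[of "L (Ri x)" c y "R (Li z)"] h2 by simp
  also have "\<dots> = R (L (add x (add y z)))"
    using x y z by (simp add: RL_add r1 h1 L_def[of x])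
  finally show ?thesis using x y z RL_inj by (metis add_Q)
qed

definition G :: "'a monoid" where "G = \<lparr>carrier = Q, mult = add, one = c\<rparr>"

lemma G_simps[simp]: "carrier G = Q" "mult G = add" "one G = c"
  by (simp_all add: G_def)

lemma grp: "comm_group G"
proof (rule comm_groupI)
  fix x assume x: "x \<in> carrier G"
  then have xQ: "x \<in> Q" by simp
  obtain u where u: "u \<in> Q" "m u (Li x) = c" using rsol[of "Li x" c] xQ by auto
  show "\<exists>y\<in>carrier G. y \<otimes>\<^bsub>G\<^esub> x = \<one>\<^bsub>G\<^esub>"
    by (rule bexI[of _ "R u"]) (simp_all add: u add_def)
qed (auto simp: add_assoc intro: add_comm)

end

sublocale qqc \<subseteq> G: comm_group G by (rule grp)

context qqc begin

lemma R_add: "x \<in> Q \<Longrightarrow> y \<in> Q \<Longrightarrow> R (add x y) = add (R x) (R y)"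
  unfolding add_def by (simp add: R_hom RLi)
lemma L_add: "x \<in> Q \<Longrightarrow> y \<in> Q \<Longrightarrow> L (add x y) = add (L x) (L y)"
  unfolding add_def by (simp add: L_hom LRi)
lemma Ri_add: "x \<in> Q \<Longrightarrow> y \<in> Q \<Longrightarrow> Ri (add x y) = add (Ri x) (Ri y)"
  by (metis R_add Ri_R Ri_Q R_Ri add_Q)
lemma Li_add: "x \<in> Q \<Longrightarrow> y \<in> Q \<Longrightarrow> Li (add x y) = add (Li x) (Li y)"
  by (metis L_add Li_L Li_Q L_Li add_Q)
lemma mul_add: "x \<in> Q \<Longrightarrow> y \<in> Q \<Longrightarrow> m x y = add (R x) (L y)"
  by (simp add: add_def)

definition J where "J x = R (Li x)"
lemma J_Q[simp]: "x \<in> Q \<Longrightarrow> J x \<in> Q" by (simp add: J_def)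
lemma J_add: "x \<in> Q \<Longrightarrow> y \<in> Q \<Longrightarrow> J (add x y) = add (J x) (J y)"
  by (simp add: J_def Li_add R_add)

lemma homs: "R \<in> hom G G" "L \<in> hom G G" "Ri \<in> hom G G" "Li \<in> hom G G" "J \<in> hom G G"
  by (auto intro!: homI simp: R_add L_add Ri_add Li_add J_add)

lemma E1: "x \<in> Q \<Longrightarrow> add (R x) (L x) = x"
  using mul_add[of x x] by simp
lemma E3: "y \<in> Q \<Longrightarrow> add (R (R y)) (L (L y)) = c"
  using B[of c y] by (simp add: mul_add R_def[symmetric] L_def[symmetric])

lemma JJ: "x \<in> Q \<Longrightarrow> J (J x) = inv\<^bsub>G\<^esub> x"
proof -
  assume x: "x \<in> Q"
  have "J (J x) = R (R (Li (Li x)))" using x by (simp add: J_def RLi)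
  moreover have "add (R (R (Li (Li x)))) x = c" using E3[of "Li (Li x)"] x by simp
  ultimately show ?thesis using x G.inv_equality[of "R (R (Li (Li x)))" x] by simp
qed

lemma Ri_formula: "x \<in> Q \<Longrightarrow> Ri x = add x (inv\<^bsub>G\<^esub> (J x))"
proof -
  assume x: "x \<in> Q"
  have "add (R (R (Li x))) (L x) = c" using E3[of "Li x"] x by simp
  then have "inv\<^bsub>G\<^esub> (R (J x)) = L x" using x G.inv_equality[of "L x" "R (J x)"] G.m_comm
    by (simp add: J_def)
  moreover have "R (inv\<^bsub>G\<^esub> (J x)) = inv\<^bsub>G\<^esub> (R (J x))"
    using homs(1) x by (simp add: group_hom.hom_inv group_hom_def group_hom_axioms_def G.group_axioms)
  moreover have iQ: "inv\<^bsub>G\<^esub> (J x) \<in> Q" using x G.inv_closed[of "J x"] by simp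
  ultimately have "R (add x (inv\<^bsub>G\<^esub> (J x))) = x" using x by (simp add: R_add E1)
  then show ?thesis using x by (metis Ri_R G.inv_closed J_Q G_simps(1) add_Q)
qed

end

locale qqab = qqc +
  fixes a b
  assumes aQ[simp]: "a \<in> Q" and bQ[simp]: "b \<in> Q" and anb: "a \<noteq> b"
    and c_def: "c = m (m a b) a"
begin

abbreviation ng where "ng x \<equiv> inv\<^bsub>G\<^esub> x"
abbreviation pw :: "'a \<Rightarrow> int \<Rightarrow> 'a" where "pw x k \<equiv> x [^]\<^bsub>G\<^esub> k"

lemma ng_Q[simp]: "x \<in> Q \<Longrightarrow> ng x \<in> Q" using G.inv_closed by simp
lemma pw_Q[simp]: "x \<in> Q \<Longrightarrow> pw x k \<in> Q" using G.int_pow_closed by simp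

lemma add_lcomm: "x \<in> Q \<Longrightarrow> y \<in> Q \<Longrightarrow> z \<in> Q \<Longrightarrow> add x (add y z) = add y (add x z)"
  by (metis add_assoc add_comm)
lemmas add_ac = add_assoc add_comm add_lcomm
lemma ng_add: "x \<in> Q \<Longrightarrow> y \<in> Q \<Longrightarrow> ng (add x y) = add (ng x) (ng y)"
  using G.inv_mult[of x y] by simp
lemma pw_distrib: "x \<in> Q \<Longrightarrow> y \<in> Q \<Longrightarrow> pw (add x y) k = add (pw x k) (pw y k)"
  using G.int_pow_distrib[of x y k] by simp
lemma pw_c[simp]: "pw c k = c" using G.int_pow_one[of k] by simp
lemma ng_ng[simp]: "x \<in> Q \<Longrightarrow> ng (ng x) = x" using G.inv_inv by simp

lemma hom_ng: "h \<in> hom G G \<Longrightarrow> x \<in> Q \<Longrightarrow> h (ng x) = ng (h x)"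
  by (simp add: group_hom.hom_inv group_hom_def group_hom_axioms_def G.group_axioms)
lemma hom_pw: "h \<in> hom G G \<Longrightarrow> x \<in> Q \<Longrightarrow> h (pw x k) = pw (h x) k"
  using hom_int_pow[of h G G x k] G.group_axioms by simp

lemma a_inv: "a = ng b"
proof -
  have e1: "L a = add (R (L a)) (L (L a))" using E1[of "L a"] by simp
  have "c = add (R (add (R a) (L b))) (L a)" using c_def by (simp add: mul_add)
  also have "\<dots> = add (add (R (R a)) (R (L b))) (add (R (L a)) (L (L a)))"
    using e1 by (simp add: R_add)
  also have "\<dots> = add (add (R (R a)) (L (L a))) (add (R (L a)) (R (L b)))"
    by (simp add: add_ac)
  also have "\<dots> = add (R (L a)) (R (L b))" using E3[of a] by simp
  also have "\<dots> = R (L (add a b))" by (simp add: R_add L_add)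
  finally have "R (L (add a b)) = R (L c)" by simp
  then have "add a b = c" using RL_inj by (metis add_Q aQ bQ cQ)
  then show ?thesis using G.inv_equality[of a b] by simp
qed

lemma ba: "m b a = J b"
proof -
  have e3: "ng (L (L b)) = R (R b)" using E3[of b] G.inv_equality[of "R (R b)" "L (L b)"]
    by (simp add: G.m_comm)
  have "L (m b a) = add (L (R b)) (ng (L (L b)))"
    by (simp add: mul_add a_inv L_add hom_ng[OF homs(2)])
  also have "\<dots> = R (add (L b) (R b))" using e3 by (simp add: R_add RL)
  also have "\<dots> = L (J b)" using E1[of b] by (simp add: add_comm J_def RL[symmetric])
  finally show ?thesis using L_inj by (metis J_Q bQ aQ clo)
qed

lemma ab: "m a b = ng (J b)"
proof -
  have "m b a = add (R b) (ng (L b))" by (simp add: mul_add a_inv hom_ng[OF homs(2)])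
  then have "ng (m b a) = add (ng (R b)) (L b)" by (simp add: ng_add)
  moreover have "m a b = add (ng (R b)) (L b)" by (simp add: mul_add a_inv hom_ng[OF homs(1)])
  ultimately show ?thesis using ba by simp
qed

definition E :: "int \<Rightarrow> int \<Rightarrow> 'a" where "E p q = add (pw b p) (pw (J b) q)"

lemma E_Q[simp]: "E p q \<in> Q" by (simp add: E_def)

lemma E_add: "E (p + p') (q + q') = add (E p q) (E p' q')"
  by (simp add: E_def G.int_pow_mult add_ac)

lemma E_mult: "E (k * p) (k * q) = pw (E p q) k"
  by (simp add: E_def pw_distrib G.int_pow_pow mult.commute)

lemma E_J: "J (E p q) = E (- q) p"
  by (simp add: E_def J_add hom_pw[OF homs(5)] JJ G.int_pow_inv G.int_pow_neg add_comm)

lemma E_inv: "ng (E p q) = E (- p) (- q)"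
  by (simp add: E_def ng_add G.int_pow_neg)

lemma Ri_E: "Ri (E p q) = E (p + q) (q - p)"
proof -
  have "Ri (E p q) = add (E p q) (E q (- p))" by (simp add: Ri_formula E_J E_inv)
  also have "\<dots> = E (p + q) (q - p)" by (simp add: E_add[symmetric])
  finally show ?thesis .
qed

lemma E_vals: "c = E 0 0" "b = E 1 0" "a = E (-1) 0" "m b a = E 0 1" "m a b = E 0 (-1)"
  using ba ab by (simp_all add: E_def a_inv G.int_pow_neg)

lemma E_eq: "E p q = E p' q' \<Longrightarrow> E (p - p') (q - q') = c"
proof -
  assume h: "E p q = E p' q'"
  have "E (p - p') (q - q') = add (E p q) (ng (E p' q'))"
    by (simp add: E_inv E_add[symmetric])
  also have "\<dots> = c" using h G.r_inv[of "E p' q'"] by simp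
  finally show ?thesis .
qed

lemma E_comb: "E p q = c \<Longrightarrow> E p' q' = c \<Longrightarrow> E (k * p + l * p') (k * q + l * q') = c"
  by (simp add: E_add E_mult)

lemma E_order: "finite Q \<Longrightarrow> E (int (card Q)) 0 = c \<and> E 0 (int (card Q)) = c"
proof -
  assume f: "finite Q"
  have "b [^]\<^bsub>G\<^esub> card Q = c" using G.power_order_eq_one[of b] f by simp
  moreover have "J b [^]\<^bsub>G\<^esub> card Q = c" using G.power_order_eq_one[of "J b"] f by simp
  ultimately show ?thesis by (simp add: E_def int_pow_int)
qed


lemma J_c[simp]: "J c = c" by (simp add: J_def)

lemma Ri_m: "x \<in> Q \<Longrightarrow> y \<in> Q \<Longrightarrow> Ri (m x y) = add (Ri y) (add x (ng y))"
proof -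
  assume x: "x \<in> Q" and y: "y \<in> Q"
  have rinv: "add (R y) (ng (R y)) = c" using G.r_inv[of "R y"] y by simp
  have "add y (ng (R y)) = add (add (R y) (L y)) (ng (R y))" using E1[of y] y by simp
  also have "\<dots> = add (add (L y) (R y)) (ng (R y))" using y add_comm[of "R y" "L y"] by simp
  also have "\<dots> = add (L y) (add (R y) (ng (R y)))" using y add_assoc by simp
  also have "\<dots> = L y" using rinv y by simp
  finally have ly: "L y = add y (ng (R y))" by simp
  have "R (add x (ng y)) = add (R x) (ng (R y))"
    using x y by (simp add: R_add hom_ng[OF homs(1)])
  moreover have "m x y = add (R x) (add y (ng (R y)))"
    using x y by (simp add: mul_add ly)
  ultimately have "m x y = add y (R (add x (ng y)))"
    using x y add_lcomm[of "R x" y "ng (R y)"] by simp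
  then have "Ri (m x y) = add (Ri y) (Ri (R (add x (ng y))))" using x y by (simp add: Ri_add)
  then show ?thesis using x y by simp
qed

lemma Ri_m_E: "Ri (m (E p q) (E r s)) = E (p + s) (q - r)"
proof -
  have "Ri (m (E p q) (E r s)) = add (E (r + s) (s - r)) (add (E p q) (E (- r) (- s)))"
    by (simp add: Ri_m Ri_E E_inv)
  also have "\<dots> = E (p + s) (q - r)" by (simp add: E_add[symmetric] add.commute)
  finally show ?thesis .
qed

lemma R_from_Ri: "x \<in> Q \<Longrightarrow> Y \<in> Q \<Longrightarrow> Ri x = Ri (Ri Y) \<Longrightarrow> R x = Y"
  by (metis R_Ri Ri_Q)

definition p1 where "p1 n = fst (hquad m a b n)"
definition p2 where "p2 n = fst (snd (hquad m a b n))"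
definition p3 where "p3 n = fst (snd (snd (hquad m a b n)))"
definition p4 where "p4 n = snd (snd (snd (hquad m a b n)))"

lemma hq: "hquad m a b n = (p1 n, p2 n, p3 n, p4 n)"
  by (simp add: p1_def p2_def p3_def p4_def)

lemma p_Suc: "p1 (Suc n) = m (p1 n) (p2 n)" "p2 (Suc n) = m (p2 n) (p4 n)"
  "p3 (Suc n) = m (p3 n) (p1 n)" "p4 (Suc n) = m (p4 n) (p3 n)"
proof -
  have "hquad m a b (Suc n) = (m (p1 n) (p2 n), m (p2 n) (p4 n), m (p3 n) (p1 n), m (p4 n) (p3 n))"
    by (simp add: hq[of n])
  then show "p1 (Suc n) = m (p1 n) (p2 n)" "p2 (Suc n) = m (p2 n) (p4 n)"
  "p3 (Suc n) = m (p3 n) (p1 n)" "p4 (Suc n) = m (p4 n) (p3 n)"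
    by (simp_all add: p1_def p2_def p3_def p4_def)
qed

lemma p_0: "p1 0 = a" "p2 0 = m a b" "p3 0 = m b a" "p4 0 = b"
  by (simp_all add: p1_def p2_def p3_def p4_def)

lemma p_Q: "p1 n \<in> Q \<and> p2 n \<in> Q \<and> p3 n \<in> Q \<and> p4 n \<in> Q"
  by (induction n) (simp_all add: p_0 p_Suc)

lemma p_Q'[simp]: "p1 n \<in> Q" "p2 n \<in> Q" "p3 n \<in> Q" "p4 n \<in> Q"
  using p_Q by auto

lemma Hs: "Hset m a b (Suc n) = {p1 n, p2 n, p3 n, p4 n}"
  by (simp add: Hset_def hq)

lemma p_Ea: "p1 0 = E (-1) 0" by (rule trans[OF p_0(1) E_vals(3)])
lemma p_Eb: "p2 0 = E 0 (-1)" by (rule trans[OF p_0(2) E_vals(5)])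
lemma p_Ec: "p3 0 = E 0 1" by (rule trans[OF p_0(3) E_vals(4)])
lemma p_Ed: "p4 0 = E 1 0" by (rule trans[OF p_0(4) E_vals(2)])
lemmas p_E = p_Ea p_Eb p_Ec p_Ed

lemma R_p: "R (p1 (Suc n)) = p2 n \<and> R (p2 (Suc n)) = p4 n \<and> R (p3 (Suc n)) = p1 n \<and> R (p4 (Suc n)) = p3 n"
proof (induction n)
  case 0
  show ?case unfolding p_Suc p_E
    by (intro conjI R_from_Ri) (simp_all only: Ri_m_E Ri_E E_Q, simp_all)
next
  case (Suc n)
  have "R (p1 (Suc (Suc n))) = m (R (p1 (Suc n))) (R (p2 (Suc n)))"
    by (simp only: p_Suc(1)[of "Suc n"] R_hom[OF p_Q'(1) p_Q'(2)])
  also have "\<dots> = m (p2 n) (p4 n)" using Suc.IH by simp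
  also have "\<dots> = p2 (Suc n)" by (rule p_Suc(2)[symmetric])
  finally have h1: "R (p1 (Suc (Suc n))) = p2 (Suc n)" .
  have "R (p2 (Suc (Suc n))) = m (R (p2 (Suc n))) (R (p4 (Suc n)))"
    by (simp only: p_Suc(2)[of "Suc n"] R_hom[OF p_Q'(2) p_Q'(4)])
  also have "\<dots> = m (p4 n) (p3 n)" using Suc.IH by simp
  also have "\<dots> = p4 (Suc n)" by (rule p_Suc(4)[symmetric])
  finally have h2: "R (p2 (Suc (Suc n))) = p4 (Suc n)" .
  have "R (p3 (Suc (Suc n))) = m (R (p3 (Suc n))) (R (p1 (Suc n)))"
    by (simp only: p_Suc(3)[of "Suc n"] R_hom[OF p_Q'(3) p_Q'(1)])
  also have "\<dots> = m (p1 n) (p2 n)" using Suc.IH by simp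
  also have "\<dots> = p1 (Suc n)" by (rule p_Suc(1)[symmetric])
  finally have h3: "R (p3 (Suc (Suc n))) = p1 (Suc n)" .
  have "R (p4 (Suc (Suc n))) = m (R (p4 (Suc n))) (R (p3 (Suc n)))"
    by (simp only: p_Suc(4)[of "Suc n"] R_hom[OF p_Q'(4) p_Q'(3)])
  also have "\<dots> = m (p3 n) (p1 n)" using Suc.IH by simp
  also have "\<dots> = p3 (Suc n)" by (rule p_Suc(3)[symmetric])
  finally have h4: "R (p4 (Suc (Suc n))) = p3 (Suc n)" .
  show ?case using h1 h2 h3 h4 by blast
qed

lemma Ri_p: "p1 (Suc n) = Ri (p2 n)" "p2 (Suc n) = Ri (p4 n)" "p3 (Suc n) = Ri (p1 n)" "p4 (Suc n) = Ri (p3 n)"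
  using R_p[of n] by (metis Ri_R p_Q')+

lemma p_E5: "p1 5 = E 4 4" "p2 5 = E (-4) 4" "p3 5 = E 4 (-4)" "p4 5 = E (-4) (-4)"
  "p2 2 = E 2 0" "p3 2 = E (-2) 0"
by (simp_all add: numeral_eq_Suc Ri_p p_E Ri_E)


lemma ng_c[simp]: "ng c = c" using G.inv_one by simp

lemma dist0: "a \<noteq> m a b" "a \<noteq> m b a" "b \<noteq> m a b" "b \<noteq> m b a" "m a b \<noteq> m b a"
  "c \<noteq> a" "c \<noteq> b" "c \<noteq> m a b" "c \<noteq> m b a"
proof -
  show 1: "a \<noteq> m a b" using lcan[of a a b] anb by (metis aQ bQ idem)
  show "a \<noteq> m b a" using rcan[of a a b] anb by (metis aQ bQ idem)
  show "b \<noteq> m a b" using rcan[of b b a] anb by (metis aQ bQ idem)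
  show "b \<noteq> m b a" using lcan[of b b a] anb by (metis aQ bQ idem)
  show "m a b \<noteq> m b a" using B[of a b] 1 by (metis aQ bQ idem clo)
  show "c \<noteq> a" using rcan[of a "m a b" a] 1 c_def by (metis aQ bQ idem clo)
  show "c \<noteq> m a b" using lcan[of "m a b" a "m a b"] 1 c_def by (metis aQ bQ idem clo)
  show cb: "c \<noteq> b"
  proof
    assume "c = b" then have "a = c" using a_inv ng_c by metis
    then show False using \<open>c = b\<close> anb by simp
  qed
  show "c \<noteq> m b a"
  proof
    assume "c = m b a" then have "J b = c" using ba by simp
    then have "J (J b) = c" by simp
    then have "ng b = c" using JJ[of b] by simp
    then have "b = c" by (metis ng_ng bQ ng_c)
    then show False using cb by simp
  qed
qed

lemma dist: "p1 n \<noteq> p2 n \<and> p1 n \<noteq> p3 n \<and> p1 n \<noteq> p4 n \<and> p2 n \<noteq> p3 n \<and> p2 n \<noteq> p4 n \<and> p3 n \<noteq> p4 n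
  \<and> c \<noteq> p1 n \<and> c \<noteq> p2 n \<and> c \<noteq> p3 n \<and> c \<noteq> p4 n"
proof (induction n)
  case 0
  then show ?case using dist0 anb by (simp add: p_0)
next
  case (Suc n)
  have r: "R (p1 (Suc n)) = p2 n" "R (p2 (Suc n)) = p4 n" "R (p3 (Suc n)) = p1 n" "R (p4 (Suc n)) = p3 n"
    using R_p[of n] by auto
  show ?case using Suc.IH r R_c by metis
qed

lemma Hs_card: "card (Hset m a b (Suc n)) = 4"
  using dist[of n] by (simp add: Hs)

lemma Hs_c: "c \<notin> Hset m a b (Suc n)"
  using dist[of n] by (simp add: Hs)

lemma main:
  assumes QU: "Q = {c} \<union> (\<Union>t\<in>{1..6}. Hset m a b t)"
    and DJ: "\<forall>s\<in>{1..6::nat}. \<forall>t\<in>{1..6}. s \<noteq> t \<longrightarrow> Hset m a b s \<inter> Hset m a b t = {}"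
  shows False
proof -
  have suc: "\<And>t. t \<in> {1..6::nat} \<Longrightarrow> Hset m a b t = Hset m a b (Suc (t - 1))" by simp
  have fH: "\<And>t. finite (Hset m a b t)"
    by (simp add: Hset_def split: prod.split)
  have cH: "\<And>t. t \<in> {1..6::nat} \<Longrightarrow> card (Hset m a b t) = 4"
    using suc Hs_card by metis
  have cU: "card (\<Union>t\<in>{1..6}. Hset m a b t) = 24"
  proof -
    have "card (\<Union>t\<in>{1..6}. Hset m a b t) = (\<Sum>t\<in>{1..6::nat}. card (Hset m a b t))"
      by (rule card_UN_disjoint) (use fH DJ in auto)
    also have "\<dots> = (\<Sum>t\<in>{1..6::nat}. 4)" using cH by (intro sum.cong) auto
    finally show ?thesis by simp
  qed
  have ncU: "c \<notin> (\<Union>t\<in>{1..6}. Hset m a b t)"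
  proof
    assume "c \<in> (\<Union>t\<in>{1..6}. Hset m a b t)"
    then obtain t where "t \<in> {1..6::nat}" "c \<in> Hset m a b t" by auto
    then show False using suc Hs_c by metis
  qed
  have finQ: "finite Q" using QU fH by auto
  have cardQ: "card Q = 25" using QU cU ncU fH
    by (simp add: card_insert_disjoint)
  have o25: "E 25 0 = c" "E 0 25 = c" using E_order[OF finQ] cardQ by auto
  have aH1: "a \<in> Hset m a b 1" using Hs[of 0] by (simp add: p_0)
  have RaQ: "R a \<in> Q" by simp
  have Ranc: "R a \<noteq> c" using dist0(6) R_inj[of a c] by auto
  obtain t where t: "t \<in> {1..6::nat}" "R a \<in> Hset m a b t" using RaQ Ranc QU by auto
  have t6: "t = 6"
  proof (rule ccontr)
    assume "t \<noteq> 6"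
    then obtain n where n: "t = Suc n" "n \<le> 4" using t(1)
      by (intro that[of "t - 1"]) auto
    have "R a \<in> {R (p3 (Suc n)), R (p1 (Suc n)), R (p4 (Suc n)), R (p2 (Suc n))}"
      using t(2) n R_p[of n] by (simp add: Hs)
    then have "a \<in> Hset m a b (Suc (Suc n))" using R_inj by (auto simp: Hs)
    then show False using DJ[rule_format, of 1 "Suc (Suc n)"] aH1 n by auto
  qed
  have "R a \<in> {E 4 4, E (-4) 4, E 4 (-4), E (-4) (-4)}"
    using t(2) t6 Hs[of 5] p_E5 by (simp add: numeral_eq_Suc)
  then have "Ri (R a) \<in> Ri ` {E 4 4, E (-4) 4, E 4 (-4), E (-4) (-4)}" by blast
  then have "a \<in> {E 8 0, E 0 8, E 0 (-8), E (-8) 0}" by (simp add: Ri_E)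
  then have "E (-1) 0 \<in> {E 8 0, E 0 8, E 0 (-8), E (-8) 0}" using E_vals(3) by simp
  moreover have bnc: "E 1 0 \<noteq> c" using dist0(7) E_vals(2) by simp
  moreover have "m b a \<in> Hset m a b 1" using Hs[of 0] by (simp add: p_0)
  moreover have "p2 2 \<in> Hset m a b 3" "p3 2 \<in> Hset m a b 3" using Hs[of 2] by (simp_all add: numeral_eq_Suc)
  moreover have "Hset m a b 1 \<inter> Hset m a b 3 = {}" using DJ by auto
  ultimately show False
  proof (elim insertE emptyE)
    assume "E (-1) 0 = E 8 0"
    then have h: "E (-9) 0 = c" using E_eq by fastforce
    have "E 1 0 = c" using E_comb[OF h o25(1), of 11 4] by simp
    then show False using bnc by simp
  next
    assume "E (-1) 0 = E (-8) 0"
    then have h: "E 7 0 = c" using E_eq by fastforce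
    have "E 1 0 = c" using E_comb[OF h o25(1), of 18 "-5"] by simp
    then show False using bnc by simp
  next
    assume "E (-1) 0 = E 0 8"
    then have h: "E (-1) (-8) = c" using E_eq by fastforce
    then have hj: "E 8 (-1) = c" using E_J[of "-1" "-8"] by simp
    have "E 127 (-24) = c" using E_comb[OF h hj, of 1 16] by simp
    then have "E 2 (-24) = c" using E_comb[OF _ o25(1), of 127 "-24" 1 "-5"] by simp
    then have h2: "E 2 1 = c" using E_comb[OF _ o25(2), of 2 "-24" 1 1] by simp
    have "E 0 1 = add (E 2 1) (E (-2) 0)" using E_add[of 2 "-2" 1 0] by simp
    then have "m b a = p3 2" using h2 E_vals(4) p_E5(6) by simp
    moreover assume "m b a \<in> Hset m a b 1" "p3 2 \<in> Hset m a b 3" "Hset m a b 1 \<inter> Hset m a b 3 = {}"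
    ultimately show False by auto
  next
    assume "E (-1) 0 = E 0 (-8)"
    then have h: "E (-1) 8 = c" using E_eq by fastforce
    then have hj: "E (-8) (-1) = c" using E_J[of "-1" 8] by simp
    have "E (-52) 26 = c" using E_comb[OF h hj, of 4 6] by simp
    then have "E (-2) 26 = c" using E_comb[OF _ o25(1), of "-52" 26 1 2] by simp
    then have h2: "E (-2) 1 = c" using E_comb[OF _ o25(2), of "-2" 26 1 "-1"] by simp
    have "E 0 1 = add (E (-2) 1) (E 2 0)" using E_add[of "-2" 2 1 0] by simp
    then have "m b a = p2 2" using h2 E_vals(4) p_E5(5) by simp
    moreover assume "m b a \<in> Hset m a b 1" "p2 2 \<in> Hset m a b 3" "Hset m a b 1 \<inter> Hset m a b 3 = {}"
    ultimately show False by auto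
  qed
qed

end

theorem theorem7p1:
  fixes Q :: "'a set" and m :: "'a \<Rightarrow> 'a \<Rightarrow> 'a" and a b :: 'a
  assumes "quadratical_quasigroup Q m"
    and "a \<in> Q" and "b \<in> Q" and "a \<noteq> b"
    and "Q = {m (m a b) a} \<union> (\<Union>t\<in>{1..6}. Hset m a b t)"
    and "\<forall>s\<in>{1..6::nat}. \<forall>t\<in>{1..6}. s \<noteq> t \<longrightarrow> Hset m a b s \<inter> Hset m a b t = {}"
  shows False
proof -
  interpret qqab Q m "m (m a b) a" a b
  proof (unfold_locales)
    show "quadratical_quasigroup Q m" by (rule assms(1))
    then interpret qq Q m by (unfold_locales)
    show "m (m a b) a \<in> Q" using assms(2,3) by simp
  qed (use assms in auto)
  show False using main assms(5,6) by blast
qed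

end
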